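(* Let $G$ be a graph, $r\ge 1$, $L_S=(s_1,\dots,s_n)$ a subordering of $S\subseteq V(G)$, and $v\in V(G)\setminus S$. Let $L_{S\cup\{v\}}$ be any subordering of $S\cup\{v\}$ with $L_{S\cup\{v\}}[S]=L_S$. Then $$\mathrm{Wreach}_r(G,L_{S\cup\{v\}},v)\setminus\{v\}=\{s\in\mathrm{bp}(G,L_S,v) \mid s\preceq_{L_{S\cup\{v\}}} v\}.$$
   Context: All graphs are finite, undirected, without loops. A path has length equal to its number of vertices minus one. A subordering $L_S$ is a linear ordering of $S\subseteq V(G)$; $\preceq_{L_S}$ means precedes or equal; $L_{S'}[S]$ is the restriction of $L_{S'}$ to $S$. For a subordering $L_S$ and $u,w\in V(G)$, $u\in\mathrm{Wreach}_r(G,L_S,w)$ iff either $u=w$, or $u\in S$ and there is a path $P$ of length at most $r$ between $u$ and $w$ with $u\preceq_{L_S} x$ for all $x\in V(P)\cap S$. For $L_S=(s_1,\dots,s_n)$ and $v\notin S$: $\mathrm{placeafter}(L_S,s_i,v)=(s_1,\dots,s_i,v,s_{i+1},\dots,s_n)$ and $\mathrm{placebefore}(L_S,s_i,v)=(s_1,\dots,s_{i-1},v,s_i,\dots,s_n)$. A vertex $s\in S$ is a breakpoint of $v$ if $\mathrm{Wreach}_r(G,\mathrm{placebefore}(L_S,s,v),v)\ne\mathrm{Wreach}_r(G,\mathrm{placeafter}(L_S,s,v),v)$; $\mathrm{bp}(G,L_S,v)$ is the set of breakpoints of $v$. *)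

theory Defs
  imports Main
begin

definition graph :: "'a set \<Rightarrow> ('a \<Rightarrow> 'a \<Rightarrow> bool) \<Rightarrow> bool" where
  "graph V E \<longleftrightarrow> finite V \<and> (\<forall>x y. E x y \<longrightarrow> x \<in> V \<and> y \<in> V)
     \<and> (\<forall>x y. E x y \<longrightarrow> E y x) \<and> (\<forall>x. \<not> E x x)"

definition is_path :: "'a set \<Rightarrow> ('a \<Rightarrow> 'a \<Rightarrow> bool) \<Rightarrow> 'a list \<Rightarrow> bool" where
  "is_path V E P \<longleftrightarrow> P \<noteq> [] \<and> distinct P \<and> set P \<subseteq> V
     \<and> (\<forall>i. Suc i < length P \<longrightarrow> E (P ! i) (P ! Suc i))"

text \<open>Position of x in L (length L if absent).\<close>
fun pos :: "'a list \<Rightarrow> 'a \<Rightarrow> nat" where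
  "pos [] x = 0"
| "pos (y # ys) x = (if y = x then 0 else Suc (pos ys x))"

text \<open>A subordering of S is a distinct list L with set L = S.
 u precedes-or-equals x in L.\<close>
definition prec_eq :: "'a list \<Rightarrow> 'a \<Rightarrow> 'a \<Rightarrow> bool" where
  "prec_eq L u x \<longleftrightarrow> u \<in> set L \<and> x \<in> set L \<and> pos L u \<le> pos L x"

definition Wreach :: "'a set \<Rightarrow> ('a \<Rightarrow> 'a \<Rightarrow> bool) \<Rightarrow> nat \<Rightarrow> 'a list \<Rightarrow> 'a \<Rightarrow> 'a set" where
  "Wreach V E r L w = {u \<in> V. u = w \<or>
     (u \<in> set L \<and> (\<exists>P. is_path V E P \<and> hd P = u \<and> last P = w \<and> length P - 1 \<le> r
        \<and> (\<forall>x \<in> set P \<inter> set L. prec_eq L u x)))}"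

definition placeafter :: "'a list \<Rightarrow> 'a \<Rightarrow> 'a \<Rightarrow> 'a list" where
  "placeafter L s v = take (Suc (pos L s)) L @ v # drop (Suc (pos L s)) L"

definition placebefore :: "'a list \<Rightarrow> 'a \<Rightarrow> 'a \<Rightarrow> 'a list" where
  "placebefore L s v = take (pos L s) L @ v # drop (pos L s) L"

definition bp :: "'a set \<Rightarrow> ('a \<Rightarrow> 'a \<Rightarrow> bool) \<Rightarrow> nat \<Rightarrow> 'a list \<Rightarrow> 'a \<Rightarrow> 'a set" where
  "bp V E r L v = {s \<in> set L. Wreach V E r (placebefore L s v) v \<noteq> Wreach V E r (placeafter L s v) v}"

definition restrict_ord :: "'a list \<Rightarrow> 'a set \<Rightarrow> 'a list" where
  "restrict_ord L S = filter (\<lambda>x. x \<in> S) L"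

end

theory Submission
  imports Defs
begin

lemma pos_filter:
  assumes "x \<in> set M" "y \<in> set M" "P x" "P y"
  shows "(pos M x \<le> pos M y) = (pos (filter P M) x \<le> pos (filter P M) y)"
  using assms by (induction M) auto

lemma pos_append:
  "pos (xs @ ys) x = (if x \<in> set xs then pos xs x else length xs + pos ys x)"
  by (induction xs) auto

lemma pos_nth: "x \<in> set L \<Longrightarrow> pos L x < length L \<and> L ! pos L x = x"
  by (induction L) auto

lemma nth_pos: "distinct L \<Longrightarrow> i < length L \<Longrightarrow> pos L (L ! i) = i"
proof (induction L arbitrary: i)
  case (Cons a L)
  then show ?case by (cases i) (auto simp: nth_mem)
qed simp

lemma in_take_pos:
  assumes "distinct L" "u \<in> set L"
  shows "(u \<in> set (take k L)) = (pos L u < k)"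
proof
  assume "u \<in> set (take k L)"
  then obtain i where "i < length (take k L)" "take k L ! i = u" by (auto simp: in_set_conv_nth)
  then show "pos L u < k" using nth_pos[OF assms(1), of i] by auto
next
  assume "pos L u < k"
  then show "u \<in> set (take k L)" using pos_nth[OF assms(2)]
    by (metis in_set_conv_nth length_take min_less_iff_conj nth_take)
qed

definition Q :: "'a set \<Rightarrow> ('a \<Rightarrow> 'a \<Rightarrow> bool) \<Rightarrow> nat \<Rightarrow> 'a list \<Rightarrow> 'a \<Rightarrow> 'a \<Rightarrow> bool" where
  "Q V E r L v u \<longleftrightarrow> u \<in> V \<and> (\<exists>P. is_path V E P \<and> hd P = u \<and> last P = v \<and> length P - 1 \<le> r
        \<and> (\<forall>x \<in> set P \<inter> set L. pos L u \<le> pos L x))"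

lemma Wreach_char:
  assumes "filter (\<lambda>x. x \<in> set L) M = L" "set M = set L \<union> {v}" "v \<notin> set L" "u \<in> set L"
  shows "(u \<in> Wreach V E r M v) = (Q V E r L v u \<and> pos M u \<le> pos M v)"
proof -
  have ord: "\<And>x. x \<in> set L \<Longrightarrow> (pos M u \<le> pos M x) = (pos L u \<le> pos L x)"
    using pos_filter[of u M _ "\<lambda>x. x \<in> set L"] assms by auto
  have uv: "u \<noteq> v" using assms by auto
  show ?thesis
  proof
    assume "u \<in> Wreach V E r M v"
    then obtain P where P: "u \<in> V" "is_path V E P" "hd P = u" "last P = v" "length P - 1 \<le> r"
      "\<forall>x \<in> set P \<inter> set M. prec_eq M u x" using uv unfolding Wreach_def by auto
    have "v \<in> set P" using P(2,4) unfolding is_path_def by auto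
    hence "pos M u \<le> pos M v" using P(6) assms(2) unfolding prec_eq_def by auto
    moreover have "\<forall>x \<in> set P \<inter> set L. pos L u \<le> pos L x"
      using P(6) assms(2) ord unfolding prec_eq_def by auto
    ultimately show "Q V E r L v u \<and> pos M u \<le> pos M v" using P unfolding Q_def by blast
  next
    assume "Q V E r L v u \<and> pos M u \<le> pos M v"
    then obtain P where P: "u \<in> V" "is_path V E P" "hd P = u" "last P = v" "length P - 1 \<le> r"
      "\<forall>x \<in> set P \<inter> set L. pos L u \<le> pos L x" "pos M u \<le> pos M v" unfolding Q_def by auto
    have "\<forall>x \<in> set P \<inter> set M. prec_eq M u x"
      using P(6,7) assms(2,4) ord unfolding prec_eq_def by auto
    then show "u \<in> Wreach V E r M v" using P assms unfolding Wreach_def by auto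
  qed
qed

lemma Wreach_sub: "Wreach V E r M v \<subseteq> set M \<union> {v}"
  unfolding Wreach_def by auto

lemma place_char:
  assumes "distinct L" "v \<notin> set L" "u \<in> set L" "k \<le> length L"
    and M: "M = take k L @ v # drop k L"
  shows "filter (\<lambda>x. x \<in> set L) M = L" "set M = set L \<union> {v}"
    "(pos M u \<le> pos M v) = (pos L u < k)"
proof -
  have "filter (\<lambda>x. x \<in> set L) M = filter (\<lambda>x. x \<in> set L) (take k L) @ filter (\<lambda>x. x \<in> set L) (drop k L)"
    using M assms(2) by simp
  also have "\<dots> = filter (\<lambda>x. x \<in> set L) L" using filter_append[of "\<lambda>x. x \<in> set L" "take k L" "drop k L"] by simp
  also have "\<dots> = L" by (simp add: filter_id_conv)
  finally show "filter (\<lambda>x. x \<in> set L) M = L" .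
  show "set M = set L \<union> {v}" using M
    by (metis Un_insert_right append_take_drop_id list.simps(15) set_append sup_bot.right_neutral)
  have vt: "v \<notin> set (take k L)" using assms(2) by (meson in_set_takeD)
  have pv: "pos M v = k" using M vt assms(4) by (simp add: pos_append)
  show "(pos M u \<le> pos M v) = (pos L u < k)"
  proof (cases "u \<in> set (take k L)")
    case True
    have "pos M u = pos (take k L) u" unfolding M using True by (simp add: pos_append)
    moreover have "pos (take k L) u < length (take k L)" using pos_nth[OF True] by blast
    ultimately show ?thesis using pv in_take_pos[OF assms(1,3)] True by simp
  next
    case False
    have uv: "u \<noteq> v" using assms(2,3) by blast
    have "pos M u = length (take k L) + pos (v # drop k L) u" unfolding M using False by (simp add: pos_append)
    hence "pos M u > k" using uv assms(4) by simp
    then show ?thesis using pv in_take_pos[OF assms(1,3)] False by simp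
  qed
qed

lemma bp_char:
  assumes "distinct L" "v \<notin> set L" "s \<in> set L" "v \<in> V"
  shows "(Wreach V E r (placebefore L s v) v \<noteq> Wreach V E r (placeafter L s v) v) = Q V E r L v s"
proof -
  define Mb where "Mb = placebefore L s v"
  define Ma where "Ma = placeafter L s v"
  have ps: "pos L s < length L" using pos_nth[OF assms(3)] by simp
  note b = place_char[OF assms(1,2) _ _ Mb_def[unfolded placebefore_def]]
  note a = place_char[OF assms(1,2) _ _ Ma_def[unfolded placeafter_def]]
  have cb: "\<And>u. u \<in> set L \<Longrightarrow> (u \<in> Wreach V E r Mb v) = (Q V E r L v u \<and> pos L u < pos L s)"
    using Wreach_char[OF b(1,2) assms(2)] b(3) ps by auto
  have ca: "\<And>u. u \<in> set L \<Longrightarrow> (u \<in> Wreach V E r Ma v) = (Q V E r L v u \<and> pos L u \<le> pos L s)"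
    using Wreach_char[OF a(1,2) assms(2)] a(3) ps by (auto simp: less_Suc_eq_le)
  have vb: "v \<in> Wreach V E r Mb v" "v \<in> Wreach V E r Ma v" using assms(4) unfolding Wreach_def by auto
  have sb: "Wreach V E r Mb v \<subseteq> set L \<union> {v}" "Wreach V E r Ma v \<subseteq> set L \<union> {v}"
    using Wreach_sub[of V E r Mb v] Wreach_sub[of V E r Ma v] b(2)[OF assms(3) less_imp_le[OF ps]] a(2)[OF assms(3)] ps by auto
  have inj: "\<And>u. u \<in> set L \<Longrightarrow> pos L u = pos L s \<Longrightarrow> u = s"
    using pos_nth assms(3) by metis
  show ?thesis unfolding Mb_def[symmetric] Ma_def[symmetric]
  proof
    assume ne: "Wreach V E r Mb v \<noteq> Wreach V E r Ma v"
    show "Q V E r L v s"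
    proof (rule ccontr)
      assume nq: "\<not> Q V E r L v s"
      have "Wreach V E r Mb v = Wreach V E r Ma v"
      proof (rule set_eqI)
        fix u
        show "(u \<in> Wreach V E r Mb v) = (u \<in> Wreach V E r Ma v)"
        proof (cases "u \<in> set L")
          case True
          then show ?thesis using cb[OF True] ca[OF True] inj[OF True] nq
            by (auto simp: order.order_iff_strict)
        next
          case False
          then show ?thesis using sb vb by auto
        qed
      qed
      then show False using ne by simp
    qed
  next
    assume "Q V E r L v s"
    then have "s \<in> Wreach V E r Ma v" "s \<notin> Wreach V E r Mb v"
      using ca[OF assms(3)] cb[OF assms(3)] by auto
    then show "Wreach V E r Mb v \<noteq> Wreach V E r Ma v" by auto
  qed
qed

theorem lemma5:
  fixes V :: "'a set" and E :: "'a \<Rightarrow> 'a \<Rightarrow> bool" and r :: nat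
    and L L' :: "'a list" and v :: 'a
  assumes "graph V E" and "r \<ge> 1"
    and "distinct L" and "set L \<subseteq> V"
    and "v \<in> V" and "v \<notin> set L"
    and "distinct L'" and "set L' = set L \<union> {v}"
    and "restrict_ord L' (set L) = L"
  shows "Wreach V E r L' v - {v} = {s \<in> bp V E r L v. prec_eq L' s v}"
proof (rule set_eqI)
  fix s
  have f: "filter (\<lambda>x. x \<in> set L) L' = L" using assms(9) unfolding restrict_ord_def by simp
  show "(s \<in> Wreach V E r L' v - {v}) = (s \<in> {s \<in> bp V E r L v. prec_eq L' s v})"
  proof (cases "s \<in> set L")
    case True
    have "s \<noteq> v" using True assms(6) by auto
    then show ?thesis
      using Wreach_char[OF f assms(8,6) True] bp_char[OF assms(3,6) True assms(5)] True assms(8)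
      unfolding bp_def prec_eq_def by auto
  next
    case False
    then show ?thesis using Wreach_sub[of V E r L' v] assms(8) unfolding bp_def by auto
  qed
qed

end
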